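(* Let $R$ be an associative (unital) ring and let $\sigma\colon R\to R$ be an additive bijection with $\sigma(1)=1$. If $R$ is right Noetherian, then the non-associative skew Laurent series ring $R((X;\sigma))$ is right Noetherian.
   Context: A right ideal of a non-associative ring $S$ is an additive subgroup $I$ with $Is\subseteq I$ for all $s\in S$; $S$ is right Noetherian if it satisfies the ascending chain condition on right ideals. $R((X;\sigma))$ is the set of formal series $\sum_{i\in\mathbb{Z}} r_iX^i$ with $r_i\in R$ and $r_i=0$ for all sufficiently negative $i$, with pointwise addition and multiplication $\left(\sum_m a_mX^m\right)\left(\sum_n b_nX^n\right)=\sum_{k}\left(\sum_{m+n=k}a_m\sigma^m(b_n)\right)X^k$ (finite inner sums), i.e. the extension of $(rX^m)(sX^n)=(r\sigma^m(s))X^{m+n}$ for $r,s\in R$, $m,n\in\mathbb{Z}$, where $\sigma^m$ for $m<0$ is a power of $\sigma^{-1}$; it is a unital, not necessarily associative ring. *)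

theory Defs
  imports Main "HOL-Library.Function_Algebras"
begin

definition right_ideal_in :: "'b::ab_group_add set \<Rightarrow> ('b \<Rightarrow> 'b \<Rightarrow> 'b) \<Rightarrow> 'b set \<Rightarrow> bool" where
  "right_ideal_in S mul I \<longleftrightarrow>
     I \<subseteq> S \<and> 0 \<in> I \<and> (\<forall>x\<in>I. \<forall>y\<in>I. x + y \<in> I) \<and> (\<forall>x\<in>I. - x \<in> I)
     \<and> (\<forall>x\<in>I. \<forall>s\<in>S. mul x s \<in> I)"

definition right_noetherian_in :: "'b::ab_group_add set \<Rightarrow> ('b \<Rightarrow> 'b \<Rightarrow> 'b) \<Rightarrow> bool" where
  "right_noetherian_in S mul \<longleftrightarrow>
     (\<forall>I :: nat \<Rightarrow> 'b set. (\<forall>n. right_ideal_in S mul (I n)) \<and> (\<forall>n. I n \<subseteq> I (Suc n))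
        \<longrightarrow> (\<exists>N. \<forall>n\<ge>N. I n = I N))"

text \<open>Formal Laurent series over R: functions int => R vanishing for all sufficiently
  negative indices; addition is pointwise (Function_Algebras).\<close>

definition laurent_carrier :: "(int \<Rightarrow> 'a::zero) set" where
  "laurent_carrier = {f. \<exists>N. \<forall>i<N. f i = 0}"

definition sigma_pow :: "('a \<Rightarrow> 'a) \<Rightarrow> int \<Rightarrow> 'a \<Rightarrow> 'a" where
  "sigma_pow \<sigma> m = (if 0 \<le> m then \<sigma> ^^ nat m else (inv \<sigma>) ^^ nat (- m))"

text \<open>Multiplication: coefficient k is the (finite) sum over m+n=k of a_m sigma^m(b_n);
  terms with a_m = 0 or b_n = 0 vanish, so we sum over the finite set of relevant m.\<close>

definition laurent_mult :: "('a::ring_1 \<Rightarrow> 'a) \<Rightarrow> (int \<Rightarrow> 'a) \<Rightarrow> (int \<Rightarrow> 'a) \<Rightarrow> (int \<Rightarrow> 'a)" where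
  "laurent_mult \<sigma> f g = (\<lambda>k. \<Sum>m \<in> {m. f m \<noteq> 0 \<and> g (k - m) \<noteq> 0}.
       f m * sigma_pow \<sigma> m (g (k - m)))"

end

theory Submission
  imports Defs
begin


lemma ideal_sum:
  assumes "right_ideal_in S mul I" "finite T" "\<And>t. t \<in> T \<Longrightarrow> x t \<in> I"
  shows "(\<Sum>t\<in>T. x t) \<in> I"
  using assms(2,3)
proof (induction T rule: finite_induct)
  case empty then show ?case using assms(1) unfolding right_ideal_in_def by simp
next
  case (insert y F) then show ?case using assms(1) unfolding right_ideal_in_def by simp
qed

lemma ideal_zero: "right_ideal_in S mul I \<Longrightarrow> 0 \<in> I"
  unfolding right_ideal_in_def by blast
lemma ideal_add: "right_ideal_in S mul I \<Longrightarrow> x \<in> I \<Longrightarrow> y \<in> I \<Longrightarrow> x + y \<in> I"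
  unfolding right_ideal_in_def by blast
lemma ideal_neg: "right_ideal_in S mul I \<Longrightarrow> x \<in> I \<Longrightarrow> - x \<in> I"
  unfolding right_ideal_in_def by blast
lemma ideal_diff: "right_ideal_in S mul I \<Longrightarrow> x \<in> I \<Longrightarrow> y \<in> I \<Longrightarrow> x - y \<in> I"
  using ideal_add[of S mul I x "- y"] ideal_neg[of S mul I y] by simp
lemma ideal_mul: "right_ideal_in S mul I \<Longrightarrow> x \<in> I \<Longrightarrow> s \<in> S \<Longrightarrow> mul x s \<in> I"
  unfolding right_ideal_in_def by blast
lemma ideal_sub: "right_ideal_in S mul I \<Longrightarrow> x \<in> I \<Longrightarrow> x \<in> S"
  unfolding right_ideal_in_def by blast

definition rspan :: "(nat \<Rightarrow> 'a::ring_1) \<Rightarrow> nat \<Rightarrow> 'a set" where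
  "rspan a n = {x. \<exists>c. x = (\<Sum>i<n. a i * c i)}"

lemma rspan_ideal: "right_ideal_in UNIV (*) (rspan a n)"
  unfolding right_ideal_in_def
proof (intro conjI ballI)
  show "0 \<in> rspan a n" unfolding rspan_def by (auto intro!: exI[of _ "\<lambda>_. 0"])
  fix x assume "x \<in> rspan a n"
  then obtain c where c: "x = (\<Sum>i<n. a i * c i)" unfolding rspan_def by blast
  show "- x \<in> rspan a n" unfolding rspan_def
    by (auto simp: c sum_negf intro!: exI[of _ "\<lambda>i. - c i"])
  fix s :: 'a
  show "x * s \<in> rspan a n" unfolding rspan_def
    by (auto simp: c sum_distrib_right mult.assoc intro!: exI[of _ "\<lambda>i. c i * s"])
next
  fix x y assume "x \<in> rspan a n" "y \<in> rspan a n"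
  then obtain c d where c: "x = (\<Sum>i<n. a i * c i)" and d: "y = (\<Sum>i<n. a i * d i)"
    unfolding rspan_def by blast
  show "x + y \<in> rspan a n" unfolding rspan_def
    by (auto simp: c d sum.distrib distrib_left intro!: exI[of _ "\<lambda>i. c i + d i"])
qed simp

lemma rspan_cong: "(\<And>i. i < n \<Longrightarrow> a i = b i) \<Longrightarrow> rspan a n = rspan b n"
  unfolding rspan_def by auto

lemma rspan_Suc: "rspan a n \<subseteq> rspan a (Suc n)"
proof
  fix x assume "x \<in> rspan a n"
  then obtain c where c: "x = (\<Sum>i<n. a i * c i)" unfolding rspan_def by blast
  have "x = (\<Sum>i<Suc n. a i * (c(n := 0)) i)" by (simp add: c)
  then show "x \<in> rspan a (Suc n)" unfolding rspan_def by blast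
qed

lemma rspan_mem: "a n \<in> rspan a (Suc n)"
proof -
  have "a n = (\<Sum>i<Suc n. a i * (\<lambda>i. if i = n then 1 else 0) i)" by simp
  then show ?thesis unfolding rspan_def by (intro CollectI exI)
qed

primrec gseq :: "'a::ring_1 set \<Rightarrow> nat \<Rightarrow> nat \<Rightarrow> 'a" where
  "gseq L 0 = (\<lambda>_. 0)"
| "gseq L (Suc n) = (gseq L n)(n := (SOME x. x \<in> L \<and> x \<notin> rspan (gseq L n) n))"

lemma fin_gen:
  fixes L :: "'a::ring_1 set"
  assumes RN: "right_noetherian_in (UNIV :: 'a set) (*)"
  shows "\<exists>n a. (\<forall>i<n. a i \<in> L) \<and> L \<subseteq> rspan a n"
proof (rule ccontr)
  assume "\<not> ?thesis"
  then have H: "\<And>n a. (\<forall>i<n. a i \<in> L) \<Longrightarrow> \<exists>x. x \<in> L \<and> x \<notin> rspan a n" by blast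
  define A where "A = gseq L"
  define P where "P n x \<longleftrightarrow> x \<in> L \<and> x \<notin> rspan (A n) n" for n x
  have AS: "A (Suc n) = (A n)(n := (SOME x. P n x))" for n
    unfolding A_def P_def by simp
  have inv: "\<forall>i<n. A n i \<in> L" for n
  proof (induction n)
    case 0 then show ?case by simp
  next
    case (Suc n)
    have "\<exists>x. P n x" using H[OF Suc] unfolding P_def by blast
    then have "P n (SOME x. P n x)" by (rule someI_ex)
    then have "(SOME x. P n x) \<in> L" unfolding P_def by blast
    then show ?case using Suc unfolding AS by (auto simp: less_Suc_eq)
  qed
  have notin: "A (Suc n) n \<notin> rspan (A n) n" for n
  proof -
    have "\<exists>x. P n x" using H[OF inv] unfolding P_def by blast
    then have "P n (SOME x. P n x)" by (rule someI_ex)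
    then show ?thesis unfolding AS P_def by simp
  qed
  have same: "rspan (A (Suc n)) n = rspan (A n) n" for n
    by (rule rspan_cong) (simp add: AS)
  define J where "J n = rspan (A n) n" for n
  have "\<forall>n. right_ideal_in UNIV (*) (J n)" unfolding J_def by (simp add: rspan_ideal)
  moreover have "\<forall>n. J n \<subseteq> J (Suc n)"
  proof
    fix n show "J n \<subseteq> J (Suc n)" unfolding J_def using rspan_Suc[of "A (Suc n)" n] same[of n] by simp
  qed
  ultimately obtain N where N: "\<forall>n\<ge>N. J n = J N"
    using RN unfolding right_noetherian_in_def by (elim allE[of _ J]) blast
  have "A (Suc N) N \<in> J (Suc N)" unfolding J_def by (rule rspan_mem)
  moreover have "J (Suc N) = J N" using N[rule_format, of "Suc N"] by linarith
  ultimately have "A (Suc N) N \<in> rspan (A n) N" if "n = N" for n unfolding J_def using that by simp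
  then have "A (Suc N) N \<in> rspan (A (Suc N)) N" using same[of N] by simp
  then show False using notin[of N] same[of N] by simp
qed

definition lead :: "(int \<Rightarrow> 'a::zero) set \<Rightarrow> 'a set" where
  "lead I = {f 0 | f. f \<in> I \<and> (\<forall>i<0. f i = 0)}"

lemma lead_intro: "f \<in> I \<Longrightarrow> \<forall>i<0. f i = 0 \<Longrightarrow> f 0 = x \<Longrightarrow> x \<in> lead I"
  unfolding lead_def by blast

lemma lead_mono: "I \<subseteq> J \<Longrightarrow> lead I \<subseteq> lead J"
  unfolding lead_def by blast




lemma sum_fun_app: "(\<Sum>t\<in>T. (H t :: 'b \<Rightarrow> 'c::comm_monoid_add)) k = (\<Sum>t\<in>T. H t k)"
  by (induction T rule: infinite_finite_induct) (auto simp: plus_fun_def zero_fun_def)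

lemma inv_additive:
  assumes "bij \<sigma>" "\<And>x y. \<sigma> (x + y) = \<sigma> x + \<sigma> y"
  shows "inv \<sigma> (x + y) = inv \<sigma> x + inv \<sigma> y"
proof -
  have "\<sigma> (inv \<sigma> x + inv \<sigma> y) = x + y"
    using assms by (simp add: bij_is_surj surj_f_inv_f)
  then show ?thesis using assms(1) by (metis bij_is_inj inv_f_f)
qed

lemma funpow_additive:
  fixes f :: "'a::ring_1 \<Rightarrow> 'a"
  assumes "\<And>x y. f (x + y) = f x + f y"
  shows "(f ^^ n) (x + y) = (f ^^ n) x + (f ^^ n) y"
  apply (induction n)
   apply simp
  apply (simp add: assms)
  done

lemma funpow_fix:
  assumes "f a = a" shows "(f ^^ n) a = a"
  by (induction n) (simp_all add: assms)

lemma additive_zero: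
  fixes f :: "'a::ring_1 \<Rightarrow> 'a"
  assumes "\<And>x y. f (x + y) = f x + f y" shows "f 0 = 0"
  using assms[of 0 0] by simp

locale sig =
  fixes \<sigma> :: "'a::ring_1 \<Rightarrow> 'a"
  assumes bij: "bij \<sigma>" and add: "\<And>x y. \<sigma> (x + y) = \<sigma> x + \<sigma> y" and one: "\<sigma> 1 = 1"
begin

lemma sp_add: "sigma_pow \<sigma> m (x + y) = sigma_pow \<sigma> m x + sigma_pow \<sigma> m y"
  unfolding sigma_pow_def
  using funpow_additive[OF add] funpow_additive[OF inv_additive[OF bij add]] by auto

lemma sp_zero: "sigma_pow \<sigma> m 0 = 0"
  by (rule additive_zero[where f="sigma_pow \<sigma> m"]) (rule sp_add)

lemma sp_one: "sigma_pow \<sigma> m 1 = 1"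
proof -
  have "inv \<sigma> 1 = 1" using bij one by (metis bij_is_inj inv_f_f)
  then show ?thesis unfolding sigma_pow_def using one by (auto intro: funpow_fix)
qed

lemma sp_0: "sigma_pow \<sigma> 0 x = x"
  unfolding sigma_pow_def by simp

abbreviation mono :: "'a \<Rightarrow> int \<Rightarrow> int \<Rightarrow> 'a" where
  "mono c j \<equiv> (\<lambda>k. if k = j then c else 0)"

lemma mult_mono:
  "laurent_mult \<sigma> f (mono c j) K = f (K - j) * sigma_pow \<sigma> (K - j) c"
proof (cases "f (K - j) \<noteq> 0 \<and> c \<noteq> 0")
  case True
  then have "{m. f m \<noteq> 0 \<and> mono c j (K - m) \<noteq> 0} = {K - j}" by auto
  then show ?thesis unfolding laurent_mult_def by simp
next
  case False
  then have S: "{m. f m \<noteq> 0 \<and> mono c j (K - m) \<noteq> 0} = {}" by auto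
  show ?thesis unfolding laurent_mult_def S using False sp_zero by auto
qed

lemma mult_formula:
  assumes "\<forall>i<a. f i = 0" "\<forall>i<b. h i = 0"
  shows "laurent_mult \<sigma> f h K = (\<Sum>m\<in>{a..K-b}. f m * sigma_pow \<sigma> m (h (K - m)))"
  unfolding laurent_mult_def
proof (rule sum.mono_neutral_left)
  show "{m. f m \<noteq> 0 \<and> h (K - m) \<noteq> 0} \<subseteq> {a..K - b}"
    using assms by (auto simp: not_less[symmetric])
  show "\<forall>i\<in>{a..K - b} - {m. f m \<noteq> 0 \<and> h (K - m) \<noteq> 0}. f i * sigma_pow \<sigma> i (h (K - i)) = 0"
    using sp_zero by auto
qed simp

lemma carrier_add: "(f :: int \<Rightarrow> 'a) \<in> laurent_carrier \<Longrightarrow> g \<in> laurent_carrier \<Longrightarrow> f + g \<in> laurent_carrier"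
  unfolding laurent_carrier_def
proof clarify
  fix N M assume "\<forall>i<N. f i = 0" "\<forall>i<M. g i = 0"
  then show "\<exists>N. \<forall>i<N. (f + g) i = 0" by (intro exI[of _ "min N M"]) (auto simp: plus_fun_def)
qed

lemma carrier_sum: "(\<And>t. t \<in> T \<Longrightarrow> (H t :: int \<Rightarrow> 'a) \<in> laurent_carrier) \<Longrightarrow> (\<Sum>t\<in>T. H t) \<in> laurent_carrier"
proof (induction T rule: infinite_finite_induct)
  case (infinite A) then show ?case by (auto simp: laurent_carrier_def)
next
  case empty then show ?case by (auto simp: laurent_carrier_def)
next
  case (insert x F)
  have "H x + sum H F \<in> laurent_carrier" by (rule carrier_add) (use insert in auto)
  then show ?case unfolding sum.insert[OF insert(1,2)] .
qed

lemma mult_zero: "laurent_mult \<sigma> f (0 :: int \<Rightarrow> 'a) = 0"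
  unfolding laurent_mult_def
  apply (rule ext)
  apply (simp add: zero_fun_def)
  done

lemma mult_add:
  assumes "f \<in> laurent_carrier" "g \<in> laurent_carrier" "h \<in> laurent_carrier"
  shows "laurent_mult \<sigma> f (g + h) = laurent_mult \<sigma> f g + laurent_mult \<sigma> f h"
proof
  fix K
  obtain a b c where a: "\<forall>i<a. f i = 0" and b: "\<forall>i<b. g i = 0" and c: "\<forall>i<c. h i = 0"
    using assms unfolding laurent_carrier_def by blast
  let ?d = "min b c"
  have b': "\<forall>i<?d. g i = 0" and c': "\<forall>i<?d. h i = 0" and d: "\<forall>i<?d. (g + h) i = 0"
    using b c by auto
  show "laurent_mult \<sigma> f (g + h) K = (laurent_mult \<sigma> f g + laurent_mult \<sigma> f h) K"
    unfolding plus_fun_def[of "laurent_mult \<sigma> f g"]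
    unfolding mult_formula[OF a b'] mult_formula[OF a c'] mult_formula[OF a d]
    by (simp add: sp_add distrib_left sum.distrib)
qed

lemma mult_sum:
  assumes "f \<in> laurent_carrier" "\<And>t. t \<in> T \<Longrightarrow> H t \<in> laurent_carrier" "finite T"
  shows "laurent_mult \<sigma> f (\<Sum>t\<in>T. H t) = (\<Sum>t\<in>T. laurent_mult \<sigma> f (H t))"
  using assms(3,2)
proof (induction T rule: finite_induct)
  case empty then show ?case by (simp only: sum.empty mult_zero)
next
  case (insert x F)
  have eq: "laurent_mult \<sigma> f (H x + sum H F) = laurent_mult \<sigma> f (H x) + laurent_mult \<sigma> f (sum H F)"
  proof (rule mult_add[OF assms(1)])
    show "H x \<in> laurent_carrier" using insert by auto
    show "sum H F \<in> laurent_carrier" by (rule carrier_sum) (use insert in auto)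
  qed
  have IH': "laurent_mult \<sigma> f (sum H F) = (\<Sum>t\<in>F. laurent_mult \<sigma> f (H t))"
    by (rule insert.IH) (use insert.prems in auto)
  show ?case unfolding sum.insert[OF insert(1,2)] by (simp only: eq IH')
qed

lemma mult_local:
  assumes "\<forall>i<0. f i = 0" "\<forall>i<b. g i = 0" "\<forall>i<b. h i = 0" "\<forall>i\<le>K. g i = h i"
  shows "laurent_mult \<sigma> f g K = laurent_mult \<sigma> f h K"
  unfolding mult_formula[OF assms(1,2)] mult_formula[OF assms(1,3)]
  using assms(4) by (intro sum.cong) auto


lemma mono_carrier: "mono c j \<in> laurent_carrier"
  unfolding laurent_carrier_def by (auto intro!: exI[of _ j])

lemma lead_ideal:
  assumes I: "right_ideal_in laurent_carrier (laurent_mult \<sigma>) I"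
  shows "right_ideal_in UNIV (*) (lead I)"
  unfolding right_ideal_in_def
proof (intro conjI ballI)
  have "(0::int \<Rightarrow> 'a) \<in> I" by (rule ideal_zero[OF I])
  moreover have "(0::int \<Rightarrow> 'a) 0 = 0" "\<forall>i<0. (0::int \<Rightarrow> 'a) i = 0" by simp_all
  ultimately show "0 \<in> lead I" by (intro lead_intro)
  fix x assume "x \<in> lead I"
  then obtain f where f: "f \<in> I" "\<forall>i<0. f i = 0" "x = f 0" unfolding lead_def by blast
  have "- f \<in> I" by (rule ideal_neg[OF I f(1)])
  moreover have "(- f) 0 = - x" "\<forall>i<0. (- f) i = 0" using f by simp_all
  ultimately show "- x \<in> lead I" by (intro lead_intro)
  fix r :: 'a
  have m: "laurent_mult \<sigma> f (mono r 0) \<in> I"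
    by (rule ideal_mul[OF I f(1) mono_carrier])
  have "laurent_mult \<sigma> f (mono r 0) 0 = x * r" by (simp add: mult_mono sp_0 f)
  moreover have "\<forall>i<0. laurent_mult \<sigma> f (mono r 0) i = 0" using f by (simp add: mult_mono)
  ultimately show "x * r \<in> lead I" using m by (intro lead_intro)
next
  fix x y assume "x \<in> lead I" "y \<in> lead I"
  then obtain f g where f: "f \<in> I" "\<forall>i<0. f i = 0" "x = f 0"
    and g: "g \<in> I" "\<forall>i<0. g i = 0" "y = g 0" unfolding lead_def by blast
  have "f + g \<in> I" by (rule ideal_add[OF I f(1) g(1)])
  moreover have "(f + g) 0 = x + y" "\<forall>i<0. (f + g) i = 0" using f g by simp_all
  ultimately show "x + y \<in> lead I" by (intro lead_intro)
qed simp

end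


lemma trunc_val:
  "(\<Sum>t<T. (\<lambda>k. if k = p + int t then (x t :: 'a::comm_monoid_add) else 0)) k
     = (if p \<le> k \<and> k < p + int T then x (nat (k - p)) else 0)"
proof -
  have "(\<Sum>t<T. (\<lambda>k. if k = p + int t then x t else 0)) k = (\<Sum>t<T. if k = p + int t then x t else 0)"
    by (rule sum_fun_app)
  also have "\<dots> = (\<Sum>t<T. if t = nat (k - p) then (if p \<le> k then x (nat (k - p)) else 0) else 0)"
    by (rule sum.cong) auto
  also have "\<dots> = (if p \<le> k \<and> k < p + int T then x (nat (k - p)) else 0)"
    by (auto simp: sum.delta)
  finally show ?thesis .
qed

context sig begin

lemma shift_lead:
  assumes J: "right_ideal_in laurent_carrier (laurent_mult \<sigma>) J"
    and e: "e \<in> J" "\<forall>i<k. e i = 0"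
  shows "e k \<in> lead J"
proof (rule lead_intro)
  show "laurent_mult \<sigma> e (mono 1 (- k)) \<in> J" by (rule ideal_mul[OF J e(1) mono_carrier])
  have c: "laurent_mult \<sigma> e (mono 1 (- k)) K = e (K + k)" for K
    by (simp add: mult_mono sp_one)
  show "\<forall>i<0. laurent_mult \<sigma> e (mono 1 (- k)) i = 0" using e(2) by (simp add: c)
  show "laurent_mult \<sigma> e (mono 1 (- k)) 0 = e k" by (simp add: c)
qed


lemma key:
  assumes RN: "right_noetherian_in (UNIV :: 'a set) (*)"
    and I: "right_ideal_in laurent_carrier (laurent_mult \<sigma>) I"
    and J: "right_ideal_in laurent_carrier (laurent_mult \<sigma>) J"
    and IJ: "I \<subseteq> J" and LJ: "lead J \<subseteq> lead I"
  shows "J \<subseteq> I"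
proof
  fix g assume g: "g \<in> J"
  obtain n a where a: "\<forall>i<n. a i \<in> lead I" and sp: "lead I \<subseteq> rspan a n"
    using fin_gen[OF RN, of "lead I"] by blast
  have "\<forall>i. \<exists>f. i < n \<longrightarrow> f \<in> I \<and> (\<forall>k<0. f k = 0) \<and> f 0 = a i"
  proof
    fix i show "\<exists>f. i < n \<longrightarrow> f \<in> I \<and> (\<forall>k<0. f k = 0) \<and> f 0 = a i"
    proof (cases "i < n")
      case True
      then have "a i \<in> lead I" using a by blast
      then obtain f where "f \<in> I" "\<forall>k<0. f k = 0" "a i = f 0" unfolding lead_def by blast
      then show ?thesis by metis
    qed simp
  qed
  from choice[OF this] obtain F where F: "\<And>i. i < n \<Longrightarrow> F i \<in> I \<and> (\<forall>k<0. F i k = 0) \<and> F i 0 = a i"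
    by blast
  obtain p where gp: "\<forall>i<p. g i = 0"
    using ideal_sub[OF J g] unfolding laurent_carrier_def by blast
  define cc where "cc k e = (SOME c. e k = (\<Sum>i<n. a i * c i))" for k and e :: "int \<Rightarrow> 'a"
  define step where "step k e = (\<Sum>i<n. laurent_mult \<sigma> (F i) (mono (cc k e i) k))" for k e
  define E where "E = rec_nat g (\<lambda>t e. e - step (p + int t) e)"
  have E0: "E 0 = g" by (simp add: E_def)
  have ES: "E (Suc t) = E t - step (p + int t) (E t)" for t by (simp add: E_def)
  have stepJ: "step k e \<in> J" for k e
    unfolding step_def
  proof (rule ideal_sum[OF J], simp)
    fix i assume "i \<in> {..<n}"
    then have "F i \<in> I" using F by blast
    then show "laurent_mult \<sigma> (F i) (mono (cc k e i) k) \<in> J"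
      using ideal_mul[OF I _ mono_carrier] IJ by blast
  qed
  have stepc: "step k e K = (\<Sum>i<n. F i (K - k) * sigma_pow \<sigma> (K - k) (cc k e i))" for k e K
    unfolding step_def sum_fun_app mult_mono ..
  have inv: "E t \<in> J \<and> (\<forall>i < p + int t. E t i = 0)" for t
  proof (induction t)
    case 0 then show ?case using g gp by (simp add: E0)
  next
    case (Suc t)
    define k where "k = p + int t"
    define e where "e = E t"
    have eJ: "e \<in> J" and ev: "\<forall>i<k. e i = 0" using Suc unfolding e_def k_def by auto
    have "e k \<in> rspan a n" using shift_lead[OF J eJ ev] LJ sp by blast
    then have "\<exists>c. e k = (\<Sum>i<n. a i * c i)" unfolding rspan_def by blast
    then have cck: "e k = (\<Sum>i<n. a i * cc k e i)" unfolding cc_def by (rule someI_ex)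
    have ES': "E (Suc t) = e - step k e" unfolding ES e_def k_def ..
    have "E (Suc t) \<in> J" unfolding ES' by (rule ideal_diff[OF J eJ stepJ])
    moreover have "E (Suc t) K = 0" if K: "K < p + int (Suc t)" for K
    proof -
      have EK: "E (Suc t) K = e K - step k e K" unfolding ES' by simp
      show ?thesis
      proof (cases "K < k")
        case True
        then have "step k e K = 0" unfolding stepc using F by simp
        then show ?thesis using EK ev True by simp
      next
        case False
        then have Kk: "K = k" using K unfolding k_def by simp
        have "step k e K = (\<Sum>i<n. a i * cc k e i)" unfolding stepc Kk
          using F by (simp add: sp_0)
        then show ?thesis using EK cck Kk by simp
      qed
    qed
    ultimately show ?case by blast
  qed
  define h where "h i = (\<lambda>k. if p \<le> k then cc k (E (nat (k - p))) i else 0)" for i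
  have hC: "h i \<in> laurent_carrier" for i
    unfolding laurent_carrier_def h_def by (auto intro!: exI[of _ p])
  have hp: "\<forall>k<p. h i k = 0" for i unfolding h_def by simp
  have hstep: "h i (p + int t) = cc (p + int t) (E t) i" for i t by (simp add: h_def)
  have tele: "g = E T + (\<Sum>t<T. step (p + int t) (E t))" for T
  proof (induction T)
    case 0 then show ?case by (simp add: E0)
  next
    case (Suc T)
    have "E (Suc T) + (\<Sum>t<Suc T. step (p + int t) (E t))
        = (E T - step (p + int T) (E T)) + ((\<Sum>t<T. step (p + int t) (E t)) + step (p + int T) (E T))"
      by (simp only: ES sum.lessThan_Suc)
    also have "\<dots> = E T + (\<Sum>t<T. step (p + int t) (E t))" by (simp add: algebra_simps)
    finally show ?case by (rule trans[OF Suc.IH sym])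
  qed
  have main: "g K = (\<Sum>i<n. laurent_mult \<sigma> (F i) (h i)) K" for K
  proof -
    define T where "T = Suc (nat (K - p))"
    have KT: "K < p + int T" unfolding T_def by simp
    have "g K = (E T + (\<Sum>t<T. step (p + int t) (E t))) K" using tele[of T] by simp
    also have "\<dots> = E T K + (\<Sum>t<T. step (p + int t) (E t) K)" by (simp add: sum_fun_app)
    also have "E T K = 0" using inv[of T] KT by blast
    also have "(\<Sum>t<T. step (p + int t) (E t) K)
        = (\<Sum>t<T. \<Sum>i<n. laurent_mult \<sigma> (F i) (mono (h i (p + int t)) (p + int t)) K)"
      unfolding step_def sum_fun_app hstep ..
    also have "\<dots> = (\<Sum>i<n. \<Sum>t<T. laurent_mult \<sigma> (F i) (mono (h i (p + int t)) (p + int t)) K)"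
      by (rule sum.swap)
    also have "\<dots> = (\<Sum>i<n. laurent_mult \<sigma> (F i) (h i) K)"
    proof (rule sum.cong[OF refl])
      fix i assume "i \<in> {..<n}"
      then have Fi: "F i \<in> I" "\<forall>k<0. F i k = 0" using F by auto
      have FC: "F i \<in> laurent_carrier" by (rule ideal_sub[OF I Fi(1)])
      have tv: "(\<Sum>t<T. mono (h i (p + int t)) (p + int t)) k
          = (if p \<le> k \<and> k < p + int T then h i (p + int (nat (k - p))) else 0)" for k
        by (rule trunc_val)
      have "(\<Sum>t<T. laurent_mult \<sigma> (F i) (mono (h i (p + int t)) (p + int t)) K)
          = laurent_mult \<sigma> (F i) (\<Sum>t<T. mono (h i (p + int t)) (p + int t)) K"
        unfolding mult_sum[OF FC mono_carrier finite_lessThan] sum_fun_app ..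
      also have "\<dots> = laurent_mult \<sigma> (F i) (h i) K"
      proof (rule mult_local[OF Fi(2)])
        show "\<forall>k<p. (\<Sum>t<T. mono (h i (p + int t)) (p + int t)) k = 0" unfolding tv by simp
        show "\<forall>k<p. h i k = 0" by (rule hp)
        show "\<forall>k\<le>K. (\<Sum>t<T. mono (h i (p + int t)) (p + int t)) k = h i k"
          unfolding tv using KT hp by auto
      qed
      finally show "(\<Sum>t<T. laurent_mult \<sigma> (F i) (mono (h i (p + int t)) (p + int t)) K)
          = laurent_mult \<sigma> (F i) (h i) K" .
    qed
    also have "\<dots> = (\<Sum>i<n. laurent_mult \<sigma> (F i) (h i)) K" by (simp add: sum_fun_app)
    finally show ?thesis by simp
  qed
  have "g = (\<Sum>i<n. laurent_mult \<sigma> (F i) (h i))" using main by (rule ext)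
  also have "\<dots> \<in> I"
  proof (rule ideal_sum[OF I], simp)
    fix i assume "i \<in> {..<n}"
    then have "F i \<in> I" using F by blast
    then show "laurent_mult \<sigma> (F i) (h i) \<in> I" by (rule ideal_mul[OF I _ hC])
  qed
  finally show "g \<in> I" .
qed

end

theorem theorem20:
  fixes \<sigma> :: "'a::ring_1 \<Rightarrow> 'a"
  assumes "bij \<sigma>"
    and "\<And>x y. \<sigma> (x + y) = \<sigma> x + \<sigma> y"
    and "\<sigma> 1 = 1"
    and "right_noetherian_in (UNIV :: 'a set) (*)"
  shows "right_noetherian_in (laurent_carrier :: (int \<Rightarrow> 'a) set) (laurent_mult \<sigma>)"
  unfolding right_noetherian_in_def
proof (intro allI impI)
  interpret sig \<sigma> by unfold_locales (use assms in auto)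
  fix I :: "nat \<Rightarrow> (int \<Rightarrow> 'a) set"
  assume H: "(\<forall>n. right_ideal_in laurent_carrier (laurent_mult \<sigma>) (I n)) \<and> (\<forall>n. I n \<subseteq> I (Suc n))"
  define Lc where "Lc n = lead (I n)" for n
  have c1: "\<forall>n. right_ideal_in UNIV (*) (Lc n)" unfolding Lc_def using lead_ideal H by blast
  have c2: "\<forall>n. Lc n \<subseteq> Lc (Suc n)" unfolding Lc_def using lead_mono H by blast
  have "\<exists>N. \<forall>n\<ge>N. Lc n = Lc N"
    using assms(4) unfolding right_noetherian_in_def
    apply (elim allE[of _ Lc])
    using c1 c2 by blast
  then obtain N where N: "\<forall>n\<ge>N. Lc n = Lc N" by blast
  show "\<exists>N. \<forall>n\<ge>N. I n = I N"
  proof (intro exI allI impI)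
    fix n assume n: "N \<le> n"
    have sub: "I N \<subseteq> I n" using lift_Suc_mono_le[of I, OF _ n] H by blast
    have eq: "Lc n = Lc N" using N n by blast
    have "I n \<subseteq> I N"
    proof (rule key[OF assms(4)])
      show "right_ideal_in laurent_carrier (laurent_mult \<sigma>) (I N)" using H by blast
      show "right_ideal_in laurent_carrier (laurent_mult \<sigma>) (I n)" using H by blast
      show "I N \<subseteq> I n" by (rule sub)
      show "lead (I n) \<subseteq> lead (I N)" using eq unfolding Lc_def by simp
    qed
    then show "I n = I N" using sub by blast
  qed
qed

end
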